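(* Let $a,b$ be positive integers with $\gcd(a,b)=1$. For all $\pi\in\mathcal{D}_{b,-a}(a,b)$, $\mathrm{word}(\widetilde{\rho}\circ\tilde f(\pi))=\mathrm{sw}^+_{b,-a}\circ\mathrm{rev}(\mathrm{word}(\pi))$.
   Context: Partitions are drawn in English convention in the first quadrant; a partition with at most $a$ parts, each at most $b$, has as frontier a lattice path from $(0,0)$ to $(b,a)$ with unit north (N) and east (E) steps, its diagram being the unit squares above and to the left of the path; $\mathrm{word}(\lambda)\in\{\mathrm{N},\mathrm{E}\}^*$ is the word of this frontier path. $\mathrm{rev}$ reverses a word. For a word $u$ with finitely many N's, $\mathrm{ptn}(u)$ is the partition whose parts are, for each N of $u$, the number of E's preceding it. The $(b,-a)$-level of a lattice point $(x,y)$ is $by-ax$; a unit square $[x,x+1]\times[y,y+1]$ has the level of its southeast corner. Under the west-south convention, a step of a path gets the level of its starting point. $\mathcal{D}_{b,-a}(a,b)$ is the set of partitions fitting in the $a\times b$ rectangle whose frontier path visits only points of nonnegative level. For $\pi\in\mathcal{D}_{b,-a}(a,b)$ let $L(\pi)$ be the set of levels of unit squares lying above the line $by=ax$ and below the frontier path of $\pi$. Let $z=z_0z_1z_2\cdots$ with $z_0=\mathrm{E}$ and, for $i>0$, $z_i=\mathrm{N}$ if $i\in L(\pi)$ and $z_i=\mathrm{E}$ otherwise; $\tilde f(\pi)=\mathrm{ptn}(z)$. Let $y$ be the subword of $z$ consisting of those $z_i$ ($i\ge0$) for which $i+a$ is the west-south level of some step of the frontier path of $\pi$; then $\widetilde\rho(\tilde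 f(\pi))=\mathrm{ptn}(y)$, regarded as a partition fitting in the $a\times b$ rectangle. For a word $w=w_1\cdots w_n$, set $l_0=0$, $l_i=l_{i-1}+b$ if $w_i=\mathrm{N}$, $l_i=l_{i-1}-a$ if $w_i=\mathrm{E}$. $\mathrm{sw}^+_{b,-a}(w)$ is obtained by: for $k=0,-1,-2,\ldots$ and then $k=\ldots,3,2,1$ (all nonpositive values in decreasing order, then positive values in decreasing order), scan $w$ from left to right appending each $w_i$ ($i\ge1$) with $l_i=k$. *)

theory Defs
  imports Main "HOL-Library.Multiset"
begin

text \<open>Letters of lattice words: N = unit north step, E = unit east step.\<close>
datatype step = N | E

definition is_partition :: "nat multiset \<Rightarrow> bool" where
  "is_partition lam \<longleftrightarrow> 0 \<notin># lam"

definition fits_in :: "nat \<Rightarrow> nat \<Rightarrow> nat multiset \<Rightarrow> bool" where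
  "fits_in a b lam \<longleftrightarrow> is_partition lam \<and> size lam \<le> a \<and> (\<forall>p\<in>#lam. p \<le> b)"

definition numN :: "step list \<Rightarrow> nat" where
  "numN u = length (filter (\<lambda>c. c = N) u)"

definition numE :: "step list \<Rightarrow> nat" where
  "numE u = length (filter (\<lambda>c. c = E) u)"

definition ptn :: "step list \<Rightarrow> nat multiset" where
  "ptn u = filter_mset (\<lambda>k. 0 < k)
     (mset (map (\<lambda>i. numE (take i u)) (filter (\<lambda>i. u ! i = N) [0..<length u])))"

text \<open>Frontier word of a partition in the a x b rectangle: rows from bottom to top have
  weakly increasing lengths mu_0 <= ... <= mu_(a-1) (the parts padded with zeros);
  the path is E^(mu_0) N E^(mu_1 - mu_0) N ... N E^(b - mu_(a-1)).\<close>
fun word_aux :: "nat \<Rightarrow> nat list \<Rightarrow> nat \<Rightarrow> step list" where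
  "word_aux prev [] b = replicate (b - prev) E"
| "word_aux prev (m # ms) b = replicate (m - prev) E @ N # word_aux m ms b"

definition word :: "nat \<Rightarrow> nat \<Rightarrow> nat multiset \<Rightarrow> step list" where
  "word a b lam = word_aux 0 (replicate (a - size lam) 0 @ sorted_list_of_multiset lam) b"

text \<open>Starting point of the i-th step (0-based) of a word, i.e. the point reached after
  the first i steps.\<close>
definition pt :: "step list \<Rightarrow> nat \<Rightarrow> nat \<times> nat" where
  "pt w i = (numE (take i w), numN (take i w))"

definition level :: "nat \<Rightarrow> nat \<Rightarrow> nat \<times> nat \<Rightarrow> int" where
  "level a b p = int b * int (snd p) - int a * int (fst p)"

definition D :: "nat \<Rightarrow> nat \<Rightarrow> nat multiset set" where
  "D a b = {\<pi>. fits_in a b \<pi> \<and>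
              (\<forall>i\<le>length (word a b \<pi>). 0 \<le> level a b (pt (word a b \<pi>) i))}"

text \<open>x-coordinate of the north step of the path w going from height y to height y+1.\<close>
definition xN :: "step list \<Rightarrow> nat \<Rightarrow> nat" where
  "xN w y = numE (take (filter (\<lambda>i. w ! i = N) [0..<length w] ! y) w)"

text \<open>L(pi): levels (level of the southeast corner (x+1,y)) of the unit squares
  [x,x+1] x [y,y+1] lying in the rectangle, below the frontier path and above the
  line b*y = a*x.\<close>
definition Lset :: "nat \<Rightarrow> nat \<Rightarrow> nat multiset \<Rightarrow> int set" where
  "Lset a b \<pi> = {level a b (x + 1, y) | x y.
      y < a \<and> x < b \<and> xN (word a b \<pi>) y \<le> x \<and> 0 \<le> level a b (x + 1, y)}"

definition zword :: "nat \<Rightarrow> nat \<Rightarrow> nat multiset \<Rightarrow> nat \<Rightarrow> step" where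
  "zword a b \<pi> i = (if i = 0 then E else if int i \<in> Lset a b \<pi> then N else E)"

definition step_levels :: "nat \<Rightarrow> nat \<Rightarrow> nat multiset \<Rightarrow> int set" where
  "step_levels a b \<pi> = {level a b (pt (word a b \<pi>) i) | i. i < length (word a b \<pi>)}"

definition yword :: "nat \<Rightarrow> nat \<Rightarrow> nat multiset \<Rightarrow> step list" where
  "yword a b \<pi> = map (zword a b \<pi>)
     (sorted_list_of_set {i::nat. int i + int a \<in> step_levels a b \<pi>})"

text \<open>rho~(f~(pi)) = ptn(y).\<close>
definition rho_f :: "nat \<Rightarrow> nat \<Rightarrow> nat multiset \<Rightarrow> nat multiset" where
  "rho_f a b \<pi> = ptn (yword a b \<pi>)"

text \<open>sw^+_{b,-a}: l_i = level after the first i letters (i = 1..n); collect letters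
  with l_i = k for k = 0,-1,-2,... and then for positive k in decreasing order.
  All l_i lie in [-a*n, b*n].\<close>
definition lvl_after :: "nat \<Rightarrow> nat \<Rightarrow> step list \<Rightarrow> nat \<Rightarrow> int" where
  "lvl_after a b w i = int b * int (numN (take i w)) - int a * int (numE (take i w))"

definition sw_plus :: "nat \<Rightarrow> nat \<Rightarrow> step list \<Rightarrow> step list" where
  "sw_plus a b w =
     (let n = length w;
          ks = rev [- (int a * int n)..0] @ rev [1..int b * int n]
      in concat (map (\<lambda>k. map (\<lambda>i. w ! (i - 1))
                         (filter (\<lambda>i. lvl_after a b w i = k) [1..<n+1])) ks))"

end

theory Submission
  imports Defs
begin


fun cs :: "step list \<Rightarrow> nat list" where
  "cs [] = []"
| "cs (N # u) = 0 # cs u"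
| "cs (E # u) = map Suc (cs u)"

lemma numE_Cons[simp]: "numE (x # u) = (if x = E then Suc (numE u) else numE u)"
  by (simp add: numE_def)
lemma numN_Cons[simp]: "numN (x # u) = (if x = N then Suc (numN u) else numN u)"
  by (simp add: numN_def)
lemma numE_Nil[simp]: "numE [] = 0" and numN_Nil[simp]: "numN [] = 0"
  by (simp_all add: numE_def numN_def)
lemma numE_app[simp]: "numE (u @ v) = numE u + numE v"
  by (simp add: numE_def)
lemma numN_app[simp]: "numN (u @ v) = numN u + numN v"
  by (simp add: numN_def)

lemma filter_idx_Cons:
  "filter (\<lambda>i. (x # u) ! i = N) [0..<Suc n] =
     (if x = N then [0] else []) @ map Suc (filter (\<lambda>i. u ! i = N) [0..<n])"
proof -
  have "[0..<Suc n] = 0 # map Suc [0..<n]"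
    by (simp add: map_Suc_upt upt_conv_Cons)
  then show ?thesis by (simp add: filter_map o_def)
qed

lemma cs_eq: "map (\<lambda>i. numE (take i u)) (filter (\<lambda>i. u ! i = N) [0..<length u]) = cs u"
proof (induction u)
  case Nil then show ?case by simp
next
  case (Cons x u)
  show ?case
  proof (cases x)
    case N
    then show ?thesis using Cons unfolding length_Cons filter_idx_Cons by (simp add: o_def)
  next
    case E
    have "map (\<lambda>i. numE (take i (x # u))) (map Suc (filter (\<lambda>i. u ! i = N) [0..<length u]))
        = map Suc (map (\<lambda>i. numE (take i u)) (filter (\<lambda>i. u ! i = N) [0..<length u]))"
      using E by (simp add: o_def)
    then show ?thesis using Cons E unfolding length_Cons filter_idx_Cons by (simp del: map_map)
  qed
qed

lemma ptn_cs: "ptn u = filter_mset (\<lambda>k. 0 < k) (mset (cs u))"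
  unfolding ptn_def cs_eq ..

lemma ptn_N: "ptn (N # u) = ptn u"
  by (simp add: ptn_cs)

lemma cs_len: "length (cs u) = numN u"
  by (induction u rule: cs.induct) auto

lemma cs_sorted: "sorted (cs u)"
  by (induction u rule: cs.induct) (auto simp: sorted_map)

lemma cs_split: "cs u = replicate (length (cs u) - length (filter (\<lambda>k. 0 < k) (cs u))) 0
                        @ filter (\<lambda>k. 0 < k) (cs u)"
proof (induction u rule: cs.induct)
  case 1 then show ?case by simp
next
  case (2 u)
  have le: "length (filter (\<lambda>k. 0 < k) (cs u)) \<le> length (cs u)" by (rule length_filter_le)
  have "Suc (length (cs u)) - length (filter (\<lambda>k. 0 < k) (cs u))
      = Suc (length (cs u) - length (filter (\<lambda>k. 0 < k) (cs u)))" using le by (rule Suc_diff_le)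
  then show ?case using 2 by simp
next
  case (3 u)
  have "filter (\<lambda>k. 0 < k) (map Suc (cs u)) = map Suc (cs u)" by (induction "cs u") auto
  then show ?case by simp
qed

lemma word_aux_E:
  assumes "\<forall>m\<in>set ms. Suc p \<le> m" "Suc p \<le> B"
  shows "word_aux p ms B = E # word_aux (Suc p) ms B"
proof (cases ms)
  case Nil
  have "B - p = Suc (B - Suc p)" using assms by simp
  then show ?thesis using Nil by simp
next
  case (Cons m ms')
  then have "m - p = Suc (m - Suc p)" using assms by auto
  then show ?thesis using Cons by simp
qed

lemma word_aux_cs: "word_aux p (map ((+) p) (cs u)) (p + numE u) = u"
proof (induction u arbitrary: p rule: cs.induct)
  case 1 then show ?case by simp
next
  case (2 u) then show ?case by simp
next
  case (3 u)
  have e1: "map ((+) p) (cs (E # u)) = map ((+) (Suc p)) (cs u)" by (simp add: o_def)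
  have e2: "p + numE (E # u) = Suc p + numE u" by simp
  have e3: "word_aux p (map ((+) (Suc p)) (cs u)) (Suc p + numE u)
      = E # word_aux (Suc p) (map ((+) (Suc p)) (cs u)) (Suc p + numE u)"
    by (rule word_aux_E) auto
  have e4: "word_aux (Suc p) (map ((+) (Suc p)) (cs u)) (Suc p + numE u) = u" by (rule 3)
  show ?case unfolding e1 e2 e3 e4 by simp
qed

lemma word_ptn:
  assumes "numN u = a" "numE u = b"
  shows "word a b (ptn u) = u"
proof -
  have p: "ptn u = mset (filter (\<lambda>k. 0 < k) (cs u))" by (simp add: ptn_cs)
  have s: "sorted_list_of_multiset (ptn u) = filter (\<lambda>k. 0 < k) (cs u)"
    unfolding p sorted_list_of_multiset_mset using sorted_filter[of id "cs u" "\<lambda>k. 0 < k"] cs_sorted[of u] by (simp add: sorted_sort_id)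
  have z: "size (ptn u) = length (filter (\<lambda>k. 0 < k) (cs u))"
    unfolding p by (simp only: size_mset)
  have "replicate (a - size (ptn u)) 0 @ sorted_list_of_multiset (ptn u) =
     replicate (length (cs u) - length (filter (\<lambda>k. 0 < k) (cs u))) 0 @ filter (\<lambda>k. 0 < k) (cs u)"
    using s z cs_len[of u] assms by simp
  also have "\<dots> = cs u" by (rule cs_split[symmetric])
  finally have "replicate (a - size (ptn u)) 0 @ sorted_list_of_multiset (ptn u) = cs u" .
  moreover have "word_aux 0 (cs u) b = u" using word_aux_cs[of 0 u] assms by (simp add: map_idI)
  ultimately show ?thesis unfolding word_def by simp
qed




lemma notN[simp]: "(x \<noteq> N) = (x = E)" by (cases x) auto
lemma notE[simp]: "(x \<noteq> E) = (x = N)" by (cases x) auto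

lemma numNE_len: "numN u + numE u = length u"
  by (induction u) auto

lemma numE_rep[simp]: "numE (replicate k E) = k" by (induction k) auto
lemma numN_rep[simp]: "numN (replicate k E) = 0" by (induction k) auto

lemma word_aux_numN: "numN (word_aux p ms B) = length ms"
  by (induction p ms B rule: word_aux.induct) simp_all

lemma word_aux_numE: "sorted ms \<Longrightarrow> \<forall>m\<in>set ms. p \<le> m \<and> m \<le> B \<Longrightarrow> p \<le> B
   \<Longrightarrow> numE (word_aux p ms B) = B - p"
proof (induction p ms B rule: word_aux.induct)
  case (1 prev b) then show ?case by simp
next
  case (2 prev m ms b)
  have s: "sorted ms" and h: "\<forall>x\<in>set ms. m \<le> x \<and> x \<le> b" and pm: "prev \<le> m" "m \<le> b"
    using "2.prems" by auto
  have "numE (word_aux m ms b) = b - m" using "2.IH"[OF s h pm(2)] .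
  then show ?case using pm by simp
qed

lemma word_counts:
  assumes "fits_in a b lam"
  shows "numN (word a b lam) = a" "numE (word a b lam) = b"
proof -
  let ?L = "sorted_list_of_multiset lam"
  let ?ms = "replicate (a - size lam) 0 @ ?L"
  have sz: "size lam \<le> a" and le: "\<forall>p\<in>#lam. p \<le> b" using assms by (auto simp: fits_in_def)
  have lL: "length ?L = size lam" by (metis mset_sorted_list_of_multiset size_mset)
  have "length ?ms = a" using sz lL by simp
  then show "numN (word a b lam) = a" unfolding word_def word_aux_numN .
  have "sorted ?ms" unfolding sorted_append by simp
  moreover have "\<forall>m\<in>set ?ms. 0 \<le> m \<and> m \<le> b" using le by (auto dest: in_set_replicate[THEN iffD1])
  ultimately have "numE (word_aux 0 ?ms b) = b - 0" by (intro word_aux_numE) auto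
  then show "numE (word a b lam) = b" unfolding word_def by simp
qed

lemma take_Suc_nums:
  assumes "i < length w"
  shows "numE (take (Suc i) w) = numE (take i w) + (if w ! i = E then 1 else 0)"
    "numN (take (Suc i) w) = numN (take i w) + (if w ! i = N then 1 else 0)"
  using assms by (auto simp: take_Suc_conv_app_nth numE_def numN_def)

lemma take_le_nums: "numE (take i w) \<le> numE w" "numN (take i w) \<le> numN w"
proof -
  have "w = take i w @ drop i w" by simp
  then have "numE w = numE (take i w) + numE (drop i w)" "numN w = numN (take i w) + numN (drop i w)"
    by (metis numE_app, metis numN_app)
  then show "numE (take i w) \<le> numE w" "numN (take i w) \<le> numN w" by auto
qed

lemma take_mono_numE: "k \<le> j \<Longrightarrow> numE (take k w) \<le> numE (take j w)"
  using take_le_nums(1)[of k "take j w"] by (simp add: min_absorb1)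

lemma cnt_N: "i \<le> length w \<Longrightarrow> length (filter (\<lambda>j. w ! j = N) [0..<i]) = numN (take i w)"
proof (induction i)
  case 0 then show ?case by simp
next
  case (Suc i)
  then show ?case by (simp add: take_Suc_conv_app_nth numN_def)
qed

lemma idx_split:
  assumes "i < length w"
  shows "filter (\<lambda>j. w ! j = N) [0..<length w] =
     filter (\<lambda>j. w ! j = N) [0..<i] @ (if w ! i = N then [i] else []) @ filter (\<lambda>j. w ! j = N) [Suc i..<length w]"
proof -
  have "[0..<length w] = [0..<i] @ i # [Suc i..<length w]"
  proof -
    have "[0..<length w] = [0..<i] @ [i..<length w]"
      using upt_add_eq_append[of 0 i "length w - i"] assms by simp
    also have "[i..<length w] = i # [Suc i..<length w]" using assms by (simp add: upt_conv_Cons)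
    finally show ?thesis .
  qed
  then show ?thesis by simp
qed

lemma xN_N:
  assumes "i < length w" "w ! i = N"
  shows "xN w (numN (take i w)) = numE (take i w)"
proof -
  have "filter (\<lambda>j. w ! j = N) [0..<length w] ! numN (take i w) = i"
    using idx_split[OF assms(1)] assms cnt_N[of i w] by (simp add: nth_append)
  then show ?thesis by (simp add: xN_def)
qed

lemma xN_E:
  assumes "i < length w" "w ! i = E" "numN (take i w) < numN w"
  shows "numE (take i w) < xN w (numN (take i w))"
proof -
  let ?R = "filter (\<lambda>j. w ! j = N) [Suc i..<length w]"
  have tot: "length (filter (\<lambda>j. w ! j = N) [0..<length w]) = numN w"
    using cnt_N[of "length w" w] by simp
  have sp: "filter (\<lambda>j. w ! j = N) [0..<length w] = filter (\<lambda>j. w ! j = N) [0..<i] @ ?R"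
    using idx_split[OF assms(1)] assms(2) by simp
  have c: "length (filter (\<lambda>j. w ! j = N) [0..<i]) = numN (take i w)"
    using cnt_N[of i w] assms(1) by simp
  have ne: "?R \<noteq> []" using tot sp c assms(3) by auto
  have eq: "filter (\<lambda>j. w ! j = N) [0..<length w] ! numN (take i w) = ?R ! 0"
    using sp c by (simp add: nth_append)
  have "?R ! 0 \<in> set ?R" using ne by (intro nth_mem) simp
  then have ge: "Suc i \<le> ?R ! 0" by simp
  have "numE (take (Suc i) w) \<le> numE (take (?R ! 0) w)" using ge by (rule take_mono_numE)
  moreover have "numE (take (Suc i) w) = Suc (numE (take i w))"
    using take_Suc_nums(1)[OF assms(1)] assms(2) by simp
  moreover have "xN w (numN (take i w)) = numE (take (?R ! 0) w)" unfolding xN_def eq by (rule refl)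
  ultimately show ?thesis by linarith
qed

lemma dvd_range:
  fixes a k :: int
  assumes "0 < a" "a dvd k" "- a \<le> k" "k \<le> a"
  shows "k = - a \<or> k = 0 \<or> k = a"
proof -
  obtain m where m: "k = a * m" using assms(2) by blast
  have "m \<le> 1" using assms(1,4) m mult_le_cancel_left_pos[of a m 1] by simp
  moreover have "-1 \<le> m" using assms(1,3) m mult_le_cancel_left_pos[of a "-1" m] by simp
  ultimately have "m = -1 \<or> m = 0 \<or> m = 1" by auto
  then show ?thesis using m by auto
qed

lemma concat_map_if:
  "concat (map (\<lambda>x. if P x then [f x] else []) xs) = map f (filter P xs)"
  by (induction xs) auto

lemma sorted_split_lt:
  fixes xs :: "int list"
  shows "sorted xs \<Longrightarrow> xs = filter (\<lambda>x. x < c) xs @ filter (\<lambda>x. \<not> x < c) xs"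
proof (induction xs)
  case Nil then show ?case by simp
next
  case (Cons x xs)
  show ?case
  proof (cases "x < c")
    case True then show ?thesis using Cons by simp
  next
    case False
    then have "filter (\<lambda>x. x < c) xs = []" using Cons(2) by (auto simp: filter_empty_conv)
    moreover have "filter (\<lambda>x. \<not> x < c) xs = xs" using False Cons(2) by (auto simp: filter_id_conv)
    ultimately show ?thesis using False by simp
  qed
qed

lemma rev_upto_neg: "map uminus (rev [- int M..0]) = [0..int M]"
proof (induction M)
  case 0 then show ?case by simp
next
  case (Suc M)
  have "[- int (Suc M)..0] = - int (Suc M) # [- int M..0]"
    by (subst upto_rec1) (auto simp: algebra_simps)
  moreover have "[0..int (Suc M)] = [0..int M] @ [int (Suc M)]"
    by (subst upto_rec2) auto
  ultimately show ?case using Suc by simp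
qed




lemma numN_mset: "numN u = size (filter_mset (\<lambda>c. c = N) (mset u))"
  by (simp add: numN_def flip: mset_filter)
lemma numE_mset: "numE u = size (filter_mset (\<lambda>c. c = E) (mset u))"
  by (simp add: numE_def flip: mset_filter)

lemma perm_nums:
  assumes "distinct js" "set js = {0..<length w}"
  shows "numN (map ((!) w) js) = numN w" "numE (map ((!) w) js) = numE w"
proof -
  have "mset js = mset [0..<length w]"
    using assms set_eq_iff_mset_eq_distinct[of js "[0..<length w]"] by simp
  then have "mset (map ((!) w) js) = mset (map ((!) w) [0..<length w])"
    by (metis mset_map)
  also have "map ((!) w) [0..<length w] = w" by (rule map_nth)
  finally have m: "mset (map ((!) w) js) = mset w" .
  show "numN (map ((!) w) js) = numN w" by (simp only: numN_mset m)
  show "numE (map ((!) w) js) = numE w" by (simp only: numE_mset m)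
qed

lemma sing_list:
  assumes d: "distinct xs" and s: "set xs = {x}" shows "xs = [x]"
proof -
  have "length xs = 1" using distinct_card[OF d] s by simp
  then obtain y where y: "xs = [y]" by (auto simp: length_Suc_conv)
  then show ?thesis using s by simp
qed

lemma sorted_map_nat_shift: "sorted (xs :: int list) \<Longrightarrow> sorted (map (\<lambda>t. nat (t - c)) xs)"
  by (induction xs) (auto simp: nat_mono)

lemma ptn_repN: "ptn (replicate k N @ u) = ptn u"
  by (induction k) (auto simp: ptn_N)

lemma numE_rev[simp]: "numE (rev u) = numE u" by (simp add: numE_def rev_filter[symmetric])
lemma numN_rev[simp]: "numN (rev u) = numN u" by (simp add: numN_def rev_filter[symmetric])




context
  fixes a b :: nat and \<pi> :: "nat multiset"
  assumes apos: "0 < a" and bpos: "0 < b" and cop: "coprime a b" and Dp: "\<pi> \<in> D a b"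
begin

abbreviation "ww \<equiv> word a b \<pi>"
abbreviation "nn \<equiv> length ww"
abbreviation "lv i \<equiv> level a b (pt ww i)"
abbreviation "XX i \<equiv> numE (take i ww)"
abbreviation "YY i \<equiv> numN (take i ww)"

lemma fitsp: "fits_in a b \<pi>" using Dp by (simp add: D_def)
lemma nN: "numN ww = a" using word_counts(1)[OF fitsp] .
lemma nE: "numE ww = b" using word_counts(2)[OF fitsp] .
lemma lenw: "nn = a + b" using numNE_len[of ww] nN nE by simp

lemma lv_eq: "lv i = int b * int (YY i) - int a * int (XX i)"
  by (simp add: level_def pt_def)

lemma nonneg: "i \<le> nn \<Longrightarrow> 0 \<le> lv i"
  using Dp by (simp add: D_def)

lemma Yle: "YY i \<le> a" using take_le_nums(2)[of i ww] nN by simp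
lemma Xle: "XX i \<le> b" using take_le_nums(1)[of i ww] nE by simp
lemma XY: "i \<le> nn \<Longrightarrow> XX i + YY i = i"
  using numNE_len[of "take i ww"] by simp

lemma copi: "coprime (int a) (int b)" using cop by simp

lemma dvd_cancel: "int a dvd int b * k \<Longrightarrow> int a dvd k"
  using coprime_dvd_mult_right_iff[OF copi] by blast

lemma inj_lv: "inj_on lv {0..<nn}"
proof (rule inj_onI)
  fix i j assume i: "i \<in> {0..<nn}" and j: "j \<in> {0..<nn}" and e: "lv i = lv j"
  have eq: "int b * (int (YY i) - int (YY j)) = int a * (int (XX i) - int (XX j))"
    using e lv_eq[of i] lv_eq[of j] by (simp add: algebra_simps)
  have "int a dvd int b * (int (YY i) - int (YY j))" unfolding eq by simp
  then have dv: "int a dvd (int (YY i) - int (YY j))" by (rule dvd_cancel)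
  have r1: "- int a \<le> int (YY i) - int (YY j)" using Yle[of j] by simp
  have r2: "int (YY i) - int (YY j) \<le> int a" using Yle[of i] by simp
  have sI: "XX i + YY i = i" using XY[of i] i by simp
  have sJ: "XX j + YY j = j" using XY[of j] j by simp
  from dvd_range[OF _ dv r1 r2] apos
  consider "int (YY i) - int (YY j) = - int a" | "int (YY i) - int (YY j) = 0"
    | "int (YY i) - int (YY j) = int a" by auto
  then show "i = j"
  proof cases
    case 1
    then have "YY j = a" "YY i = 0" using Yle[of j] by auto
    then have "int a * (int (XX i) - int (XX j) + int b) = 0" using eq 1 by (simp add: algebra_simps)
    then have "int (XX i) - int (XX j) = - int b" using apos by simp
    then have "XX j = b" using Xle[of j] by linarith
    moreover have "j < nn" using j by simp
    ultimately show ?thesis using sJ lenw \<open>YY j = a\<close> by linarith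
  next
    case 2
    then have yy: "YY i = YY j" by simp
    have "int b * 0 = int a * (int (XX i) - int (XX j))" using eq unfolding 2 .
    then have xx: "XX i = XX j" using apos by simp
    show ?thesis using sI sJ yy xx by linarith
  next
    case 3
    then have "YY i = a" "YY j = 0" using Yle[of i] by auto
    then have "int a * (int (XX i) - int (XX j) - int b) = 0" using eq 3 by (simp add: algebra_simps)
    then have "int (XX i) - int (XX j) = int b" using apos by simp
    then have "XX i = b" using Xle[of i] by linarith
    moreover have "i < nn" using i by simp
    ultimately show ?thesis using sI lenw \<open>YY i = a\<close> by linarith
  qed
qed

lemma lvSuc: "i < nn \<Longrightarrow> lv (Suc i) = (if ww ! i = N then lv i + int b else lv i - int a)"
  using take_Suc_nums[of i ww] by (auto simp: lv_eq algebra_simps)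

lemma E_ge: "i < nn \<Longrightarrow> ww ! i = E \<Longrightarrow> int a \<le> lv i"
  using lvSuc[of i] nonneg[of "Suc i"] by simp

lemma key:
  assumes i: "i < nn" and ge: "int a \<le> lv i"
  shows "zword a b \<pi> (nat (lv i - int a)) = ww ! i"
proof (cases "ww ! i")
  case N
  have y: "YY i < a" using take_Suc_nums(2)[OF i] N Yle[of "Suc i"] by simp
  have ne: "lv i \<noteq> int a"
  proof
    assume h: "lv i = int a"
    then have "int b * int (YY i) = int a * (int (XX i) + 1)" by (simp add: lv_eq algebra_simps)
    then have "int a dvd int b * int (YY i)" by simp
    then have "int a dvd int (YY i)" by (rule dvd_cancel)
    then have "a dvd YY i" by simp
    then have y0: "YY i = 0" using y nat_dvd_not_less[of "YY i" a] by auto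
    have m: "0 \<le> int a * int (XX i)" by simp
    have "- (int a * int (XX i)) = int a" using h lv_eq[of i] y0 by simp
    then show False using m apos by linarith
  qed
  have x: "XX i < b"
  proof (rule ccontr)
    assume "\<not> XX i < b"
    then have "XX i = b" using Xle[of i] by simp
    then have "lv i = int b * int (YY i) - int a * int b" by (simp add: lv_eq)
    moreover have "int b * int (YY i) < int b * int a" using y bpos by simp
    ultimately have "lv i < 0" by (simp add: algebra_simps)
    then show False using nonneg[of i] i by simp
  qed
  have xn: "xN ww (YY i) = XX i" using xN_N[OF i N] .
  have lvl: "level a b (XX i + 1, YY i) = lv i - int a" by (simp add: level_def pt_def algebra_simps)
  have "lv i - int a \<in> Lset a b \<pi>"
    unfolding Lset_def using y x xn lvl ge by (intro CollectI exI[of _ "XX i"] exI[of _ "YY i"]) auto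
  moreover have "nat (lv i - int a) \<noteq> 0" using ne ge by simp
  ultimately show ?thesis using N ge by (simp add: zword_def)
next
  case E
  show ?thesis
  proof (cases "lv i = int a")
    case True then show ?thesis using E by (simp add: zword_def)
  next
    case False
    have notin: "lv i - int a \<notin> Lset a b \<pi>"
    proof
      assume "lv i - int a \<in> Lset a b \<pi>"
      then obtain x y where y: "y < a" and x: "x < b" and xn: "xN ww y \<le> x"
        and l: "level a b (x + 1, y) = lv i - int a" unfolding Lset_def by auto
      have eq: "int b * (int (YY i) - int y) = int a * (int (XX i) - int x)"
        using l by (simp add: level_def pt_def algebra_simps)
      have "int a dvd int b * (int (YY i) - int y)" unfolding eq by simp
      then have dv: "int a dvd (int (YY i) - int y)" by (rule dvd_cancel)
      have r1: "- int a \<le> int (YY i) - int y" using y by simp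
      have r2: "int (YY i) - int y \<le> int a" using Yle[of i] by simp
      have xs: "XX i + 1 \<le> b" using take_Suc_nums(1)[OF i] E Xle[of "Suc i"] by simp
      from dvd_range[OF _ dv r1 r2] apos
      consider "int (YY i) - int y = - int a" | "int (YY i) - int y = 0"
        | "int (YY i) - int y = int a" by auto
      then show False
      proof cases
        case 1 then show False using y by simp
      next
        case 2
        then have yy: "YY i = y" by simp
        have "int b * 0 = int a * (int (XX i) - int x)" using eq unfolding 2 .
        then have xx: "XX i = x" using apos by simp
        have "YY i < numN ww" using yy y nN by simp
        from xN_E[OF i E this] show False using xn yy xx by simp
      next
        case 3
        then have "int a * (int (XX i) - int x - int b) = 0" using eq by (simp add: algebra_simps)
        then have "int (XX i) - int x = int b" using apos by simp
        then show False using xs by linarith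
      qed
    qed
    have "0 < nat (lv i - int a)" using False ge by simp
    moreover have "int (nat (lv i - int a)) = lv i - int a" using ge by simp
    ultimately show ?thesis using notin E by (simp add: zword_def)
  qed
qed


abbreviation "SL \<equiv> step_levels a b \<pi>"
abbreviation "iv t \<equiv> inv_into {0..<nn} lv t"
abbreviation "letter t \<equiv> ww ! iv t"
abbreviation "Ls \<equiv> sorted_list_of_set SL"

lemma SL_eq: "SL = lv ` {0..<nn}" by (auto simp: step_levels_def)
lemma SL_fin: "finite SL" unfolding SL_eq by simp
lemma set_Ls: "set Ls = SL" using SL_fin by simp

lemma iv_lv: "i < nn \<Longrightarrow> iv (lv i) = i"
  by (rule inv_into_f_f[OF inj_lv]) simp

lemma SL_cases: "t \<in> SL \<Longrightarrow> \<exists>j<nn. t = lv j"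
  unfolding SL_eq by auto

lemma SL_nonneg: "t \<in> SL \<Longrightarrow> 0 \<le> t"
  using SL_cases nonneg by fastforce

lemma SL_le: "t \<in> SL \<Longrightarrow> t \<le> int (a * nn)"
proof -
  assume "t \<in> SL"
  then obtain j where j: "j < nn" "t = lv j" using SL_cases by blast
  have "t \<le> int b * int (YY j)" using j lv_eq[of j] by simp
  also have "\<dots> \<le> int b * int a" using Yle[of j] by (intro mult_left_mono) simp_all
  also have "\<dots> \<le> int a * int nn" using lenw by (simp add: algebra_simps)
  finally show ?thesis by simp
qed

lemma lvl_rev:
  assumes "i \<le> nn"
  shows "lvl_after a b (rev ww) i = - lv (nn - i)"
proof -
  let ?j = "nn - i"
  have sp: "ww = take ?j ww @ drop ?j ww" by simp
  have e1: "numE (drop ?j ww) + XX ?j = b" using nE numE_app[of "take ?j ww" "drop ?j ww"] sp by simp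
  have e2: "numN (drop ?j ww) + YY ?j = a" using nN numN_app[of "take ?j ww" "drop ?j ww"] sp by simp
  have "lvl_after a b (rev ww) i = int b * int (numN (drop ?j ww)) - int a * int (numE (drop ?j ww))"
    unfolding lvl_after_def take_rev by simp
  also have "\<dots> = int b * (int a - int (YY ?j)) - int a * (int b - int (XX ?j))"
  proof -
    have "int (numN (drop ?j ww)) = int a - int (YY ?j)" using e2 by linarith
    moreover have "int (numE (drop ?j ww)) = int b - int (XX ?j)" using e1 by linarith
    ultimately show ?thesis by simp
  qed
  also have "\<dots> = - lv ?j" unfolding lv_eq by (simp add: algebra_simps)
  finally show ?thesis .
qed

lemma rhs_block:
  "map (\<lambda>i. rev ww ! (i - 1)) (filter (\<lambda>i. lvl_after a b (rev ww) i = k) [1..<nn+1])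
     = (if - k \<in> SL then [letter (- k)] else [])"
proof -
  let ?F = "filter (\<lambda>i. lvl_after a b (rev ww) i = k) [1..<nn+1]"
  have sF: "set ?F = {i. 1 \<le> i \<and> i \<le> nn \<and> lv (nn - i) = - k}"
    using lvl_rev by auto
  have dF: "distinct ?F" by simp
  show ?thesis
  proof (cases "- k \<in> SL")
    case True
    then obtain j where j: "j < nn" "- k = lv j" using SL_cases by blast
    have "set ?F = {nn - j}"
    proof
      show "set ?F \<subseteq> {nn - j}"
      proof
        fix i assume "i \<in> set ?F"
        then have i: "1 \<le> i" "i \<le> nn" "lv (nn - i) = lv j" using sF j by auto
        then have "nn - i = j" using inj_lv j(1) by (auto dest: inj_onD)
        then show "i \<in> {nn - j}" using i by auto
      qed
      show "{nn - j} \<subseteq> set ?F" using sF j by auto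
    qed
    then have F: "?F = [nn - j]" using dF by (rule sing_list[rotated])
    have "rev ww ! (nn - j - 1) = ww ! j" using j(1) by (simp add: rev_nth)
    then show ?thesis using F True j iv_lv[of j] by simp
  next
    case False
    have "\<forall>i\<in>set [1..<nn+1]. lvl_after a b (rev ww) i \<noteq> k"
    proof
      fix i assume "i \<in> set [1..<nn+1]"
      then have i: "1 \<le> i" "i \<le> nn" by auto
      show "lvl_after a b (rev ww) i \<noteq> k"
      proof
        assume "lvl_after a b (rev ww) i = k"
        then have "lv (nn - i) = - k" using lvl_rev[OF i(2)] by simp
        moreover have "nn - i \<in> {0..<nn}" using i by auto
        ultimately have "- k \<in> SL" unfolding SL_eq by (metis image_eqI)
        then show False using False by simp
      qed
    qed
    then have "?F = []" by (simp only: filter_False)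
    then show ?thesis using False by simp
  qed
qed

lemma filter_SL: "filter (\<lambda>t. t \<in> SL) [0..int (a * nn)] = Ls"
proof (rule sorted_distinct_set_unique)
  show "sorted (filter (\<lambda>t. t \<in> SL) [0..int (a * nn)])" by (simp add: sorted_wrt_filter)
  show "distinct (filter (\<lambda>t. t \<in> SL) [0..int (a * nn)])" by simp
  show "sorted Ls" by simp
  show "distinct Ls" by simp
  show "set (filter (\<lambda>t. t \<in> SL) [0..int (a * nn)]) = set Ls"
    using set_Ls SL_nonneg SL_le by auto
qed

lemma rhs: "sw_plus a b (rev ww) = map letter Ls"
proof -
  let ?M = "a * nn"
  let ?G = "\<lambda>k. map (\<lambda>i. rev ww ! (i - 1)) (filter (\<lambda>i. lvl_after a b (rev ww) i = k) [1..<nn+1])"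
  have "sw_plus a b (rev ww) = concat (map ?G (rev [- (int a * int nn)..0] @ rev [1..int b * int nn]))"
    unfolding sw_plus_def Let_def by simp
  also have "\<dots> = concat (map (\<lambda>k. if - k \<in> SL then [letter (- k)] else [])
                      (rev [- (int a * int nn)..0] @ rev [1..int b * int nn]))"
    using rhs_block by simp
  also have "\<dots> = map (\<lambda>k. letter (- k)) (filter (\<lambda>k. - k \<in> SL)
                      (rev [- (int a * int nn)..0] @ rev [1..int b * int nn]))"
    by (rule concat_map_if)
  finally have 0: "sw_plus a b (rev ww) = map (\<lambda>k. letter (- k)) (filter (\<lambda>k. - k \<in> SL)
                      (rev [- (int a * int nn)..0] @ rev [1..int b * int nn]))" .
  have e: "filter (\<lambda>k. - k \<in> SL) (rev [1..int b * int nn]) = []"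
    by (force simp: filter_empty_conv dest: SL_nonneg)
  have e2: "- (int a * int nn) = - int ?M" by simp
  have 1: "sw_plus a b (rev ww) = map (\<lambda>k. letter (- k)) (filter (\<lambda>k. - k \<in> SL) (rev [- int ?M..0]))"
    using 0 unfolding e2 filter_append e by simp
  have "map (\<lambda>k. letter (- k)) (filter (\<lambda>k. - k \<in> SL) (rev [- int ?M..0]))
      = map letter (map uminus (filter (\<lambda>k. - k \<in> SL) (rev [- int ?M..0])))" by simp
  also have "map uminus (filter (\<lambda>k. - k \<in> SL) (rev [- int ?M..0]))
      = filter (\<lambda>t. t \<in> SL) (map uminus (rev [- int ?M..0]))" by (simp add: filter_map o_def)
  also have "\<dots> = Ls" unfolding rev_upto_neg by (rule filter_SL)
  finally show ?thesis using 1 by simp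
qed


abbreviation "Yset \<equiv> {i::nat. int i + int a \<in> SL}"
abbreviation "Hi \<equiv> filter (\<lambda>x. \<not> x < int a) Ls"
abbreviation "Lo \<equiv> filter (\<lambda>x. x < int a) Ls"

lemma Ls_split: "Ls = Lo @ Hi"
  by (rule sorted_split_lt) simp

lemma Lo_N: "map letter Lo = replicate (length Lo) N"
proof -
  have "map letter Lo = map (\<lambda>_. N) Lo"
  proof (rule map_cong[OF refl])
    fix t assume "t \<in> set Lo"
    then have t: "t \<in> SL" "t < int a" using set_Ls by auto
    then obtain j where j: "j < nn" "t = lv j" using SL_cases by blast
    have "ww ! j = N" using E_ge[OF j(1)] t(2) j(2) by (cases "ww ! j") auto
    then show "letter t = N" using j iv_lv[of j] by simp
  qed
  then show ?thesis by (simp add: map_replicate_const)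
qed

lemma set_Hi: "set Hi = {t \<in> SL. int a \<le> t}"
  using set_Ls by auto

lemma Yset_eq: "Yset = set (map (\<lambda>t. nat (t - int a)) Hi)"
proof
  show "Yset \<subseteq> set (map (\<lambda>t. nat (t - int a)) Hi)"
  proof
    fix i assume "i \<in> Yset"
    then have m: "int i + int a \<in> set Hi" unfolding set_Hi by simp
    show "i \<in> set (map (\<lambda>t. nat (t - int a)) Hi)" unfolding set_map by (rule image_eqI[OF _ m]) simp
  qed
  show "set (map (\<lambda>t. nat (t - int a)) Hi) \<subseteq> Yset"
  proof
    fix i assume "i \<in> set (map (\<lambda>t. nat (t - int a)) Hi)"
    then obtain t where t: "t \<in> set Hi" "i = nat (t - int a)" by auto
    then have "t \<in> SL" "int a \<le> t" using set_Hi by auto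
    moreover have "int i + int a = t" using t \<open>int a \<le> t\<close> by simp
    ultimately show "i \<in> Yset" by simp
  qed
qed

lemma sl_Yset: "sorted_list_of_set Yset = map (\<lambda>t. nat (t - int a)) Hi"
proof (rule sorted_distinct_set_unique)
  have fin: "finite Yset" unfolding Yset_eq by simp
  show "sorted (sorted_list_of_set Yset)" by simp
  show "distinct (sorted_list_of_set Yset)" by simp
  show "sorted (map (\<lambda>t. nat (t - int a)) Hi)"
    by (rule sorted_map_nat_shift) (simp add: sorted_wrt_filter)
  have "inj_on (\<lambda>t. nat (t - int a)) (set Hi)"
    by (rule inj_onI) (auto simp: set_Hi)
  then show "distinct (map (\<lambda>t. nat (t - int a)) Hi)"
    by (simp add: distinct_map)
  show "set (sorted_list_of_set Yset) = set (map (\<lambda>t. nat (t - int a)) Hi)"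
    using fin Yset_eq by simp
qed

lemma yword_eq: "yword a b \<pi> = map letter Hi"
proof -
  have "yword a b \<pi> = map (zword a b \<pi>) (map (\<lambda>t. nat (t - int a)) Hi)"
    unfolding yword_def sl_Yset ..
  also have "\<dots> = map letter Hi"
  proof (simp only: map_map, rule map_cong[OF refl])
    fix t assume "t \<in> set Hi"
    then have t: "t \<in> SL" "int a \<le> t" using set_Hi by auto
    then obtain j where j: "j < nn" "t = lv j" using SL_cases by blast
    have "zword a b \<pi> (nat (lv j - int a)) = ww ! j" using key[OF j(1)] t j by simp
    then show "(zword a b \<pi> \<circ> (\<lambda>t. nat (t - int a))) t = letter t" using j iv_lv[of j] by simp
  qed
  finally show ?thesis .
qed

lemma letter_perm: "numN (map letter Ls) = a \<and> numE (map letter Ls) = b"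
proof -
  have m: "map letter Ls = map ((!) ww) (map iv Ls)" by simp
  have inj: "inj_on iv (set Ls)" unfolding set_Ls SL_eq by (rule inj_on_inv_into) simp
  have d: "distinct (map iv Ls)" using inj by (simp add: distinct_map)
  have "set (map iv Ls) = iv ` SL" using set_Ls by simp
  also have "\<dots> = iv ` lv ` {0..<nn}" unfolding SL_eq ..
  also have "\<dots> = {0..<nn}"
    unfolding image_image using iv_lv by (auto intro!: image_eqI)
  finally have s: "set (map iv Ls) = {0..<nn}" .
  show ?thesis unfolding m using perm_nums[OF d s] nN nE by simp
qed

lemma lhs: "word a b (rho_f a b \<pi>) = map letter Ls"
proof -
  have "rho_f a b \<pi> = ptn (map letter Hi)" unfolding rho_f_def yword_eq ..
  also have "\<dots> = ptn (replicate (length Lo) N @ map letter Hi)" by (rule ptn_repN[symmetric])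
  also have "replicate (length Lo) N @ map letter Hi = map letter Ls"
    using Ls_split Lo_N by (metis map_append)
  finally have "rho_f a b \<pi> = ptn (map letter Ls)" .
  then show ?thesis using word_ptn letter_perm by simp
qed

lemma main_ctx: "word a b (rho_f a b \<pi>) = sw_plus a b (rev (word a b \<pi>))"
  using lhs rhs by simp

end


theorem mainTheorem7:
  fixes a b :: nat and \<pi> :: "nat multiset"
  assumes "0 < a" and "0 < b" and "coprime a b"
    and "\<pi> \<in> D a b"
  shows "word a b (rho_f a b \<pi>) = sw_plus a b (rev (word a b \<pi>))"
  using main_ctx[OF assms] .

end
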